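(* Let $n\ge 2$, let $\mathcal{S}\subseteq(\mathbb{C}^d)^{\otimes n}$ be the permutation-symmetric subspace, let $|\psi\rangle\in\mathcal{S}$ and let $X$ be a $d\times d$ complex matrix with $X_{(1)}|\psi\rangle\in\mathcal{S}$. Then for all nonnegative integers $p_1,\ldots,p_n$ with $p_1+\cdots+p_n=p$, $$X^p_{(1)}|\psi\rangle=X^{p_1}\otimes X^{p_2}\otimes\cdots\otimes X^{p_n}|\psi\rangle.$$ If $X$ is invertible, the same holds for all integers $p_1,\ldots,p_n$ (possibly negative) with $p_1+\cdots+p_n=p$.
   Context: $\mathcal{S}$ is the set of vectors in $(\mathbb{C}^d)^{\otimes n}$ invariant under all permutations of the $n$ tensor factors. $X^p_{(1)}$ denotes $X^p\otimes\mathbb{I}\otimes\cdots\otimes\mathbb{I}$ on $(\mathbb{C}^d)^{\otimes n}$. *)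

theory Defs
  imports "HOL-Combinatorics.Permutations" "Jordan_Normal_Form.Matrix"
begin

text \<open>Vectors of (C^d)^{tensor n} are represented as complex-valued functions on
  index lists (i_1,...,i_n) with each i_k < d; only values on idx d n matter.\<close>

definition idx :: "nat \<Rightarrow> nat \<Rightarrow> nat list set" where
  "idx d n = {is. length is = n \<and> set is \<subseteq> {..<d}}"

definition tensor_apply ::
  "nat \<Rightarrow> nat \<Rightarrow> (nat \<Rightarrow> complex mat) \<Rightarrow> (nat list \<Rightarrow> complex) \<Rightarrow> nat list \<Rightarrow> complex" where
  "tensor_apply d n A \<psi> is = (\<Sum>js\<in>idx d n. (\<Prod>k<n. A k $$ (is ! k, js ! k)) * \<psi> js)"

definition perm_symmetric :: "nat \<Rightarrow> nat \<Rightarrow> (nat list \<Rightarrow> complex) \<Rightarrow> bool" where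
  "perm_symmetric d n \<psi> \<longleftrightarrow>
     (\<forall>\<sigma>. \<sigma> permutes {..<n} \<longrightarrow>
        (\<forall>is\<in>idx d n. \<psi> (map (\<lambda>k. is ! \<sigma> k) [0..<n]) = \<psi> is))"

definition first_site :: "nat \<Rightarrow> complex mat \<Rightarrow> nat \<Rightarrow> complex mat" where
  "first_site d Y = (\<lambda>k. if k = 0 then Y else 1\<^sub>m d)"

definition mat_inv :: "nat \<Rightarrow> complex mat \<Rightarrow> complex mat" where
  "mat_inv d X = (SOME B. B \<in> carrier_mat d d \<and> inverts_mat X B \<and> inverts_mat B X)"

definition mat_powi :: "nat \<Rightarrow> complex mat \<Rightarrow> int \<Rightarrow> complex mat" where
  "mat_powi d X k = (if 0 \<le> k then X ^\<^sub>m nat k else mat_inv d X ^\<^sub>m nat (- k))"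

end

theory Submission imports Defs "HOL-Combinatorics.Permutations" begin

lemma idx_Suc: "idx d (Suc n) = (\<lambda>(j,js). j#js) ` ({..<d} \<times> idx d n)"
  unfolding idx_def
  apply (auto simp: image_iff length_Suc_conv)
  done

lemma idx_finite: "finite (idx d n)"
  by (induct n) (auto simp: idx_Suc, simp add: idx_def)

lemma sum_prod_idx:
  fixes f :: "nat \<Rightarrow> nat \<Rightarrow> complex"
  shows   "(\<Sum>js\<in>idx d n. \<Prod>k<n. f k (js ! k)) = (\<Prod>k<n. \<Sum>j<d. f k j)"
proof (induct n arbitrary: f)
  case 0
  have "idx d 0 = {[]}" by (auto simp: idx_def)
  then show ?case by simp
next
  case (Suc n)
  have inj: "inj_on (\<lambda>(j,js). j#js) ({..<d} \<times> idx d n)" by (auto simp: inj_on_def)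
  have "(\<Sum>js\<in>idx d (Suc n). \<Prod>k<Suc n. f k (js ! k))
     = (\<Sum>(j,js)\<in>{..<d} \<times> idx d n. \<Prod>k<Suc n. f k ((j#js) ! k))"
    unfolding idx_Suc by (subst sum.reindex[OF inj]) (simp add: case_prod_unfold)
  also have "\<dots> = (\<Sum>(j,js)\<in>{..<d} \<times> idx d n. f 0 j * (\<Prod>k<n. f (Suc k) (js ! k)))"
    by (simp only: prod.lessThan_Suc_shift nth_Cons_0 nth_Cons_Suc)
  also have "\<dots> = (\<Sum>j<d. \<Sum>js\<in>idx d n. f 0 j * (\<Prod>k<n. f (Suc k) (js ! k)))"
    by (simp add: sum.cartesian_product)
  also have "\<dots> = (\<Sum>j<d. f 0 j) * (\<Prod>k<n. \<Sum>j<d. f (Suc k) j)"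
    proof -
    have "\<And>j. (\<Sum>js\<in>idx d n. f 0 j * (\<Prod>k<n. f (Suc k) (js ! k)))
       = f 0 j * (\<Prod>k<n. \<Sum>j<d. f (Suc k) j)"
      by (simp only: sum_distrib_left[symmetric] Suc[of "\<lambda>k. f (Suc k)"])
    then show ?thesis by (simp only: sum_distrib_right)
  qed
  also have "\<dots> = (\<Prod>k<Suc n. \<Sum>j<d. f k j)"
    by (rule prod.lessThan_Suc_shift[symmetric])
  finally show ?case .
qed


lemma idx_nth: "ix \<in> idx d n \<Longrightarrow> k < n \<Longrightarrow> ix ! k < d"
  unfolding idx_def by (auto dest!: nth_mem)

lemma tensor_cong:
  assumes "\<And>k. k < n \<Longrightarrow> A k = B k" "\<And>js. js \<in> idx d n \<Longrightarrow> \<phi> js = \<psi> js"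
  shows "tensor_apply d n A \<phi> ix = tensor_apply d n B \<psi> ix"
  unfolding tensor_apply_def using assms by (intro sum.cong prod.cong refl) auto

lemma tensor_comp:
  assumes A: "\<And>k. k < n \<Longrightarrow> A k \<in> carrier_mat d d"
    and B: "\<And>k. k < n \<Longrightarrow> B k \<in> carrier_mat d d"
    and ix: "ix \<in> idx d n"
  shows "tensor_apply d n A (tensor_apply d n B \<psi>) ix = tensor_apply d n (\<lambda>k. A k * B k) \<psi> ix"
proof -
  have "tensor_apply d n A (tensor_apply d n B \<psi>) ix
      = (\<Sum>js\<in>idx d n. \<Sum>ls\<in>idx d n. (\<Prod>k<n. A k $$ (ix ! k, js ! k)) * ((\<Prod>k<n. B k $$ (js ! k, ls ! k)) * \<psi> ls))"
    unfolding tensor_apply_def by (simp add: sum_distrib_left)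
  also have "\<dots> = (\<Sum>ls\<in>idx d n. (\<Sum>js\<in>idx d n. \<Prod>k<n. A k $$ (ix ! k, js ! k) * B k $$ (js ! k, ls ! k)) * \<psi> ls)"
    by (subst sum.swap) (simp add: sum_distrib_right prod.distrib mult.assoc)
  also have "\<dots> = (\<Sum>ls\<in>idx d n. (\<Prod>k<n. (A k * B k) $$ (ix ! k, ls ! k)) * \<psi> ls)"
  proof (rule sum.cong[OF refl])
    fix ls assume ls: "ls \<in> idx d n"
    have "(\<Sum>js\<in>idx d n. \<Prod>k<n. A k $$ (ix ! k, js ! k) * B k $$ (js ! k, ls ! k))
        = (\<Prod>k<n. \<Sum>j<d. A k $$ (ix ! k, j) * B k $$ (j, ls ! k))"
      using sum_prod_idx[of "\<lambda>k j. A k $$ (ix ! k, j) * B k $$ (j, ls ! k)" n d] by simp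
    also have "\<dots> = (\<Prod>k<n. (A k * B k) $$ (ix ! k, ls ! k))"
    proof (rule prod.cong[OF refl])
      fix k assume k: "k \<in> {..<n}"
      then have k: "k < n" by simp
      have i: "ix ! k < d" and l: "ls ! k < d" using idx_nth ix ls k by auto
      show "(\<Sum>j<d. A k $$ (ix ! k, j) * B k $$ (j, ls ! k)) = (A k * B k) $$ (ix ! k, ls ! k)"
        using A[OF k] B[OF k] i l
        by (simp add: scalar_prod_def atLeast0LessThan)
    qed
    finally show "(\<Sum>js\<in>idx d n. \<Prod>k<n. A k $$ (ix ! k, js ! k) * B k $$ (js ! k, ls ! k)) * \<psi> ls
        = (\<Prod>k<n. (A k * B k) $$ (ix ! k, ls ! k)) * \<psi> ls" by simp
  qed
  finally show ?thesis unfolding tensor_apply_def .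
qed

lemma tensor_id:
  assumes ix: "ix \<in> idx d n"
  shows "tensor_apply d n (\<lambda>k. 1\<^sub>m d) \<psi> ix = \<psi> ix"
proof -
  have "tensor_apply d n (\<lambda>k. 1\<^sub>m d) \<psi> ix = (\<Sum>js\<in>idx d n. (if ix = js then \<psi> js else 0))"
    unfolding tensor_apply_def
  proof (rule sum.cong[OF refl])
    fix js assume js: "js \<in> idx d n"
    have "(\<Prod>k<n. 1\<^sub>m d $$ (ix ! k, js ! k)) = (\<Prod>k<n. (if ix ! k = js ! k then 1 else 0 :: complex))"
      using idx_nth[OF ix] idx_nth[OF js] by (intro prod.cong) auto
    also have "\<dots> = (if ix = js then 1 else 0)"
    proof (cases "ix = js")
      case True then show ?thesis by simp
    next
      case False
      have "length ix = n" "length js = n" using ix js by (auto simp: idx_def)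
      with False obtain k where k: "k < n" "ix ! k \<noteq> js ! k" using nth_equalityI by metis
      have "(\<Prod>k<n. (if ix ! k = js ! k then 1 else 0 :: complex)) = 0"
        apply (subst prod_zero_iff) apply simp using k by auto
      then show ?thesis using False by simp
    qed
    finally show "(\<Prod>k<n. 1\<^sub>m d $$ (ix ! k, js ! k)) * \<psi> js = (if ix = js then \<psi> js else 0)" by simp
  qed
  also have "\<dots> = \<psi> ix" using ix idx_finite by (simp add: sum.delta)
  finally show ?thesis .
qed


definition site :: "nat \<Rightarrow> nat \<Rightarrow> complex mat \<Rightarrow> nat \<Rightarrow> complex mat" where
  "site d i Y = (\<lambda>k. if k = i then Y else 1\<^sub>m d)"

definition pmap :: "(nat \<Rightarrow> nat) \<Rightarrow> nat \<Rightarrow> nat list \<Rightarrow> nat list" where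
  "pmap \<sigma> n ls = map (\<lambda>k. ls ! \<sigma> k) [0..<n]"

lemma transp_lt: "(i::nat) < n \<Longrightarrow> k < n \<Longrightarrow> transpose 0 i k < n"
proof -
  assume "i < n" "k < n"
  then have "0 < n" by linarith
  with \<open>i < n\<close> \<open>k < n\<close> show ?thesis by (auto simp: transpose_def)
qed

lemma pmap_idx: "i < n \<Longrightarrow> ls \<in> idx d n \<Longrightarrow> pmap (transpose 0 i) n ls \<in> idx d n"
  using idx_nth[of ls d n, OF _ transp_lt[of i n]] by (auto simp: pmap_def idx_def)

lemma pmap_nth: "k < n \<Longrightarrow> pmap \<sigma> n ls ! k = ls ! \<sigma> k"
  unfolding pmap_def by simp

lemma pmap_pmap: "i < n \<Longrightarrow> ls \<in> idx d n \<Longrightarrow> pmap (transpose 0 i) n (pmap (transpose 0 i) n ls) = ls"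
proof (rule nth_equalityI)
  assume i: "i < n" and ls: "ls \<in> idx d n"
  then show "length (pmap (transpose 0 i) n (pmap (transpose 0 i) n ls)) = length ls"
    by (simp add: pmap_def idx_def)
  fix k assume "k < length (pmap (transpose 0 i) n (pmap (transpose 0 i) n ls))"
  then have k: "k < n" by (simp add: pmap_def)
  then show "pmap (transpose 0 i) n (pmap (transpose 0 i) n ls) ! k = ls ! k"
    by (simp add: pmap_nth transp_lt[OF i k])
qed

lemma perm_tensor:
  assumes i: "i < n" and ix: "ix \<in> idx d n"
  shows "tensor_apply d n A \<psi> (pmap (transpose 0 i) n ix)
       = tensor_apply d n (\<lambda>k. A (transpose 0 i k)) (\<lambda>js. \<psi> (pmap (transpose 0 i) n js)) ix"
proof -
  let ?s = "transpose 0 i" and ?p = "pmap (transpose 0 i) n"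
  have "(\<Sum>ls\<in>idx d n. (\<Prod>k<n. A (?s k) $$ (ix ! k, ls ! k)) * \<psi> (?p ls))
      = (\<Sum>js\<in>idx d n. (\<Prod>k<n. A k $$ (?p ix ! k, js ! k)) * \<psi> js)"
  proof (rule sum.reindex_bij_witness[of _ ?p ?p])
    fix ls assume ls: "ls \<in> idx d n"
    show "?p (?p ls) = ls" using pmap_pmap[OF i ls] .
    show "?p ls \<in> idx d n" using pmap_idx[OF i ls] .
    have "(\<Prod>k<n. A k $$ (?p ix ! k, ?p ls ! k)) = (\<Prod>k<n. A k $$ (ix ! ?s k, ls ! ?s k))"
      by (intro prod.cong) (auto simp: pmap_nth)
    also have "\<dots> = (\<Prod>k<n. A (?s k) $$ (ix ! k, ls ! k))"
      by (rule prod.reindex_bij_witness[of _ ?s ?s]) (auto simp: transp_lt[OF i])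
    finally show "(\<Prod>k<n. A k $$ (?p ix ! k, ?p ls ! k)) * \<psi> (?p ls) = (\<Prod>k<n. A (?s k) $$ (ix ! k, ls ! k)) * \<psi> (?p ls)"
      by simp
  next
    fix ls assume ls: "ls \<in> idx d n"
    show "?p (?p ls) = ls" using pmap_pmap[OF i ls] .
    show "?p ls \<in> idx d n" using pmap_idx[OF i ls] .
  qed
  then show ?thesis unfolding tensor_apply_def by simp
qed

lemma site_eq:
  assumes i: "i < n"
    and s1: "perm_symmetric d n \<psi>"
    and s2: "perm_symmetric d n (tensor_apply d n (first_site d Y) \<psi>)"
    and ix: "ix \<in> idx d n"
  shows "tensor_apply d n (site d i Y) \<psi> ix = tensor_apply d n (first_site d Y) \<psi> ix"
proof -
  let ?s = "transpose 0 i" and ?p = "pmap (transpose 0 i) n"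
  have perm: "?s permutes {..<n}" using i by (intro permutes_swap_id) auto
  have "tensor_apply d n (first_site d Y) \<psi> ix = tensor_apply d n (first_site d Y) \<psi> (?p ix)"
    using s2 perm ix unfolding perm_symmetric_def pmap_def by auto
  also have "\<dots> = tensor_apply d n (\<lambda>k. first_site d Y (?s k)) (\<lambda>js. \<psi> (?p js)) ix"
    by (rule perm_tensor[OF i ix])
  also have "\<dots> = tensor_apply d n (site d i Y) \<psi> ix"
  proof (rule tensor_cong)
    fix k assume "k < n"
    show "first_site d Y (?s k) = site d i Y k"
      unfolding first_site_def site_def by (auto simp: transpose_def)
  next
    fix js assume "js \<in> idx d n"
    then show "\<psi> (?p js) = \<psi> js" using s1 perm unfolding perm_symmetric_def pmap_def by auto
  qed
  finally show ?thesis by simp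
qed


lemma pow_add_mat: "X \<in> carrier_mat d d \<Longrightarrow> X ^\<^sub>m (a + b) = X ^\<^sub>m a * X ^\<^sub>m b"
proof (induct b)
  case 0 then show ?case by simp
next
  case (Suc b)
  have "X ^\<^sub>m (a + Suc b) = X ^\<^sub>m (a + b) * X" by simp
  also have "\<dots> = X ^\<^sub>m a * X ^\<^sub>m b * X" using Suc by simp
  also have "\<dots> = X ^\<^sub>m a * (X ^\<^sub>m b * X)" using Suc.prems by (intro assoc_mult_mat) auto
  finally show ?case by simp
qed

lemma absorb:
  assumes X: "X \<in> carrier_mat d d" and i: "i < n" and ix: "ix \<in> idx d n"
  shows "tensor_apply d n (\<lambda>k. X ^\<^sub>m a k) (tensor_apply d n (site d i X) \<psi>) ix
       = tensor_apply d n (\<lambda>k. X ^\<^sub>m (a(i := Suc (a i))) k) \<psi> ix"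
proof -
  have "tensor_apply d n (\<lambda>k. X ^\<^sub>m a k) (tensor_apply d n (site d i X) \<psi>) ix
      = tensor_apply d n (\<lambda>k. X ^\<^sub>m a k * site d i X k) \<psi> ix"
    using X ix by (intro tensor_comp) (auto simp: site_def)
  also have "\<dots> = tensor_apply d n (\<lambda>k. X ^\<^sub>m (a(i := Suc (a i))) k) \<psi> ix"
    using X by (intro tensor_cong) (auto simp: site_def)
  finally show ?thesis .
qed

lemma move:
  assumes X: "X \<in> carrier_mat d d"
    and s1: "perm_symmetric d n \<psi>"
    and s2: "perm_symmetric d n (tensor_apply d n (first_site d X) \<psi>)"
    and i: "i < n" and j: "j < n" and ai: "a i = Suc m" and ix: "ix \<in> idx d n"
  shows "tensor_apply d n (\<lambda>k. X ^\<^sub>m a k) \<psi> ix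
       = tensor_apply d n (\<lambda>k. X ^\<^sub>m (a(i := m, j := Suc ((a(i := m)) j))) k) \<psi> ix"
proof -
  let ?a = "a(i := m)"
  have "tensor_apply d n (\<lambda>k. X ^\<^sub>m a k) \<psi> ix = tensor_apply d n (\<lambda>k. X ^\<^sub>m (?a(i := Suc (?a i))) k) \<psi> ix"
    using ai by (intro tensor_cong) auto
  also have "\<dots> = tensor_apply d n (\<lambda>k. X ^\<^sub>m ?a k) (tensor_apply d n (site d i X) \<psi>) ix"
    by (rule absorb[OF X i ix, symmetric])
  also have "\<dots> = tensor_apply d n (\<lambda>k. X ^\<^sub>m ?a k) (tensor_apply d n (site d j X) \<psi>) ix"
    by (rule tensor_cong) (simp_all add: site_eq[OF i s1 s2] site_eq[OF j s1 s2])
  also have "\<dots> = tensor_apply d n (\<lambda>k. X ^\<^sub>m (?a(j := Suc (?a j))) k) \<psi> ix"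
    by (rule absorb[OF X j ix])
  finally show ?thesis .
qed

lemma sum_split0: "0 < n \<Longrightarrow> sum (a::nat\<Rightarrow>nat) {..<n} = a 0 + sum a {1..<n}"
  by (simp add: lessThan_atLeast0 sum.atLeast_Suc_lessThan)

lemma collect:
  assumes X: "X \<in> carrier_mat d d"
    and s1: "perm_symmetric d n \<psi>"
    and s2: "perm_symmetric d n (tensor_apply d n (first_site d X) \<psi>)"
    and n: "0 < n" and ix: "ix \<in> idx d n"
  shows "tensor_apply d n (\<lambda>k. X ^\<^sub>m a k) \<psi> ix
       = tensor_apply d n (\<lambda>k. X ^\<^sub>m (if k = 0 then sum a {..<n} else 0)) \<psi> ix"
proof (induct "sum a {1..<n}" arbitrary: a rule: less_induct)
  case less
  show ?case
  proof (cases "sum a {1..<n} = 0")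
    case True
    then have z: "\<And>k. k \<in> {1..<n} \<Longrightarrow> a k = 0" by simp
    show ?thesis
    proof (rule tensor_cong)
      fix k assume k: "k < n"
      show "X ^\<^sub>m a k = X ^\<^sub>m (if k = 0 then sum a {..<n} else 0)"
        using z[of k] k True sum_split0[OF n, of a] by (cases "k = 0") auto
    qed simp
  next
    case False
    then obtain i where i: "i \<in> {1..<n}" and ai: "a i \<noteq> 0" by (meson sum.neutral)
    then obtain m where m: "a i = Suc m" using not0_implies_Suc by blast
    have i0: "i \<noteq> 0" and il: "i < n" using i by auto
    let ?b = "a(i := m, 0 := Suc ((a(i := m)) 0))"
    have b0: "?b 0 = Suc (a 0)" using i0 by simp
    have r: "sum a {1..<n} = a i + sum a ({1..<n} - {i})" using i by (simp add: sum.remove)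
    have rb: "sum ?b {1..<n} = ?b i + sum ?b ({1..<n} - {i})" using i by (simp add: sum.remove)
    have same: "sum ?b ({1..<n} - {i}) = sum a ({1..<n} - {i})" by (intro sum.cong) auto
    have bi: "?b i = m" using i0 by simp
    have lt: "sum ?b {1..<n} < sum a {1..<n}" using r rb same bi m by simp
    have eqs: "sum ?b {..<n} = sum a {..<n}"
      using sum_split0[OF n, of ?b] sum_split0[OF n, of a] r rb same bi m b0 i0 by simp
    have "tensor_apply d n (\<lambda>k. X ^\<^sub>m a k) \<psi> ix = tensor_apply d n (\<lambda>k. X ^\<^sub>m ?b k) \<psi> ix"
      by (rule move[where a=a and i=i and j=0 and m=m, OF X s1 s2 il n m ix])
    also have "\<dots> = tensor_apply d n (\<lambda>k. X ^\<^sub>m (if k = 0 then sum ?b {..<n} else 0)) \<psi> ix"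
      by (rule less[OF lt])
    finally show ?thesis unfolding eqs .
  qed
qed


lemma eq_sums:
  assumes X: "X \<in> carrier_mat d d"
    and s1: "perm_symmetric d n \<psi>"
    and s2: "perm_symmetric d n (tensor_apply d n (first_site d X) \<psi>)"
    and n: "0 < n" and ix: "ix \<in> idx d n" and s: "sum a {..<n} = sum b {..<n}"
  shows "tensor_apply d n (\<lambda>k. X ^\<^sub>m a k) \<psi> ix = tensor_apply d n (\<lambda>k. X ^\<^sub>m b k) \<psi> ix"
  using collect[OF X s1 s2 n ix, of a] collect[OF X s1 s2 n ix, of b] s by metis

lemma first_site_pow:
  assumes X: "X \<in> carrier_mat d d"
  shows "tensor_apply d n (first_site d (X ^\<^sub>m m)) \<psi> ix
       = tensor_apply d n (\<lambda>k. X ^\<^sub>m (if k = 0 then m else 0)) \<psi> ix"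
  using X by (intro tensor_cong) (auto simp: first_site_def)

lemma inv_props:
  assumes X: "X \<in> carrier_mat d d" and inv: "invertible_mat X"
  shows "mat_inv d X \<in> carrier_mat d d \<and> X * mat_inv d X = 1\<^sub>m d \<and> mat_inv d X * X = 1\<^sub>m d"
proof -
  obtain B where B: "inverts_mat X B" "inverts_mat B X" using inv unfolding invertible_mat_def by blast
  have XB: "X * B = 1\<^sub>m d" using B(1) X unfolding inverts_mat_def by simp
  have BX: "B * X = 1\<^sub>m (dim_row B)" using B(2) unfolding inverts_mat_def by simp
  have "dim_col (B * X) = d" using X by simp
  then have r: "dim_row B = d" using BX by simp
  have "dim_col (X * B) = d" using XB by simp
  then have c: "dim_col B = d" by simp
  have "B \<in> carrier_mat d d \<and> inverts_mat X B \<and> inverts_mat B X" using r c B by auto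
  then have "mat_inv d X \<in> carrier_mat d d \<and> inverts_mat X (mat_inv d X) \<and> inverts_mat (mat_inv d X) X"
    unfolding mat_inv_def by (rule someI)
  then show ?thesis using X unfolding inverts_mat_def by auto
qed

lemma cancel_pow:
  assumes X: "X \<in> carrier_mat d d" and Y: "Y \<in> carrier_mat d d" and XY: "X * Y = 1\<^sub>m d"
  shows "j \<le> M \<Longrightarrow> X ^\<^sub>m M * Y ^\<^sub>m j = X ^\<^sub>m (M - j)"
proof (induct j arbitrary: M)
  case 0 then show ?case using X Y by simp
next
  case (Suc j)
  then obtain M' where M: "M = Suc M'" by (cases M) auto
  have Y1: "Y ^\<^sub>m (Suc j) = Y * Y ^\<^sub>m j"
    using pow_add_mat[OF Y, of 1 j] Y by simp
  have "X ^\<^sub>m M * Y ^\<^sub>m (Suc j) = (X ^\<^sub>m M' * X) * (Y * Y ^\<^sub>m j)" using M Y1 by simp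
  also have "\<dots> = X ^\<^sub>m M' * ((X * Y) * Y ^\<^sub>m j)" using X Y
    by (simp add: assoc_mult_mat[of _ d d _ d _ d])
  also have "\<dots> = X ^\<^sub>m M' * Y ^\<^sub>m j" using XY Y by simp
  also have "\<dots> = X ^\<^sub>m (M' - j)" using Suc M by simp
  finally show ?case using M by simp
qed

lemma powi_carrier: "X \<in> carrier_mat d d \<Longrightarrow> invertible_mat X \<Longrightarrow> mat_powi d X q \<in> carrier_mat d d"
  using inv_props unfolding mat_powi_def by auto

lemma powi_shift:
  assumes X: "X \<in> carrier_mat d d" and inv: "invertible_mat X" and q: "0 \<le> int M + q"
  shows "X ^\<^sub>m M * mat_powi d X q = X ^\<^sub>m nat (int M + q)"
proof (cases "0 \<le> q")
  case True
  then have "nat (int M + q) = M + nat q" by simp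
  then show ?thesis using True pow_add_mat[OF X, of M "nat q"] unfolding mat_powi_def by simp
next
  case False
  have I: "mat_inv d X \<in> carrier_mat d d" "X * mat_inv d X = 1\<^sub>m d" using inv_props[OF X inv] by auto
  have le: "nat (- q) \<le> M" using q False by simp
  have "nat (int M + q) = M - nat (-q)" using q False by simp
  then show ?thesis using False cancel_pow[OF X I(1) I(2) le] unfolding mat_powi_def by simp
qed

lemma undo:
  assumes X: "X \<in> carrier_mat d d" and inv: "invertible_mat X" and ix: "ix \<in> idx d n"
    and F: "\<And>k. k < n \<Longrightarrow> F k \<in> carrier_mat d d"
  shows "tensor_apply d n F \<psi> ix
    = tensor_apply d n (\<lambda>k. mat_inv d X ^\<^sub>m M) (tensor_apply d n (\<lambda>k. X ^\<^sub>m M) (tensor_apply d n F \<psi>)) ix"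
proof -
  have I: "mat_inv d X \<in> carrier_mat d d" "mat_inv d X * X = 1\<^sub>m d" using inv_props[OF X inv] by auto
  have c: "mat_inv d X ^\<^sub>m M * X ^\<^sub>m M = 1\<^sub>m d"
    using cancel_pow[OF I(1) X I(2), of M M] I(1) by simp
  have "tensor_apply d n (\<lambda>k. mat_inv d X ^\<^sub>m M) (tensor_apply d n (\<lambda>k. X ^\<^sub>m M) (tensor_apply d n F \<psi>)) ix
      = tensor_apply d n (\<lambda>k. mat_inv d X ^\<^sub>m M * X ^\<^sub>m M) (tensor_apply d n F \<psi>) ix"
    using I X ix by (intro tensor_comp) auto
  also have "\<dots> = tensor_apply d n (\<lambda>k. 1\<^sub>m d) (tensor_apply d n F \<psi>) ix"
    using c by simp
  also have "\<dots> = tensor_apply d n F \<psi> ix" by (rule tensor_id[OF ix])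
  finally show ?thesis by simp
qed


theorem corollary1:
  fixes d n :: nat and X :: "complex mat" and \<psi> :: "nat list \<Rightarrow> complex"
  assumes "n \<ge> 2"
    and "X \<in> carrier_mat d d"
    and "perm_symmetric d n \<psi>"
    and "perm_symmetric d n (tensor_apply d n (first_site d X) \<psi>)"
  shows "(\<forall>ps :: nat \<Rightarrow> nat. \<forall>is\<in>idx d n.
            tensor_apply d n (first_site d (X ^\<^sub>m (\<Sum>k<n. ps k))) \<psi> is
          = tensor_apply d n (\<lambda>k. X ^\<^sub>m ps k) \<psi> is)
       \<and> (invertible_mat X \<longrightarrow>
          (\<forall>ps :: nat \<Rightarrow> int. \<forall>is\<in>idx d n.
            tensor_apply d n (first_site d (mat_powi d X (\<Sum>k<n. ps k))) \<psi> is
          = tensor_apply d n (\<lambda>k. mat_powi d X (ps k)) \<psi> is))"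
proof -
  have n: "0 < n" using assms(1) by simp
  note X = assms(2) and s1 = assms(3) and s2 = assms(4)
  have part1: "tensor_apply d n (first_site d (X ^\<^sub>m (\<Sum>k<n. ps k))) \<psi> ix
          = tensor_apply d n (\<lambda>k. X ^\<^sub>m ps k) \<psi> ix" if ix: "ix \<in> idx d n" for ps ix
  proof -
    have "tensor_apply d n (first_site d (X ^\<^sub>m (\<Sum>k<n. ps k))) \<psi> ix
        = tensor_apply d n (\<lambda>k. X ^\<^sub>m (if k = 0 then (\<Sum>k<n. ps k) else 0)) \<psi> ix"
      by (rule first_site_pow[OF X])
    also have "\<dots> = tensor_apply d n (\<lambda>k. X ^\<^sub>m ps k) \<psi> ix"
      by (rule collect[OF X s1 s2 n ix, symmetric])
    finally show ?thesis .
  qed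
  have part2: "tensor_apply d n (first_site d (mat_powi d X (\<Sum>k<n. ps k))) \<psi> ix
          = tensor_apply d n (\<lambda>k. mat_powi d X (ps k)) \<psi> ix"
    if inv: "invertible_mat X" and ix: "ix \<in> idx d n" for ps :: "nat \<Rightarrow> int" and ix
  proof -
    define p where "p = (\<Sum>k<n. ps k)"
    define M where "M = (\<Sum>k<n. nat \<bar>ps k\<bar>)"
    have Mi: "int M = (\<Sum>k<n. \<bar>ps k\<bar>)" unfolding M_def by (simp add: of_nat_sum)
    have pk: "\<bar>ps k\<bar> \<le> int M" if "k < n" for k
      unfolding Mi using that by (intro member_le_sum) auto
    have pM: "\<bar>p\<bar> \<le> int M" unfolding Mi p_def by (rule sum_abs)
    define a where "a = (\<lambda>k. nat (int M + ps k))"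
    define b where "b = (\<lambda>k::nat. if k = 0 then nat (int M + p) else M)"
    have cF: "\<And>k. k < n \<Longrightarrow> first_site d (mat_powi d X p) k \<in> carrier_mat d d"
      using powi_carrier[OF X inv] by (auto simp: first_site_def)
    have cG: "\<And>k. k < n \<Longrightarrow> mat_powi d X (ps k) \<in> carrier_mat d d"
      using powi_carrier[OF X inv] by auto
    have sa: "int (sum a {..<n}) = int n * int M + p"
    proof -
      have "int (sum a {..<n}) = (\<Sum>k<n. int M + ps k)"
        unfolding a_def of_nat_sum using pk by (intro sum.cong) (auto, smt (verit) lessThan_iff)
      also have "\<dots> = int n * int M + p" unfolding p_def by (simp add: sum.distrib)
      finally show ?thesis .
    qed
    have sb: "int (sum b {..<n}) = int n * int M + p"
    proof -
      have "sum b {..<n} = b 0 + sum b {1..<n}" by (rule sum_split0[OF n])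
      also have "sum b {1..<n} = (n - 1) * M" unfolding b_def by simp
      finally have "sum b {..<n} = nat (int M + p) + (n - 1) * M" unfolding b_def by simp
      then have "int (sum b {..<n}) = int (nat (int M + p)) + int ((n - 1) * M)" by (simp only: of_nat_add)
      also have "\<dots> = (int M + p) + (int n - 1) * int M" using pM n by (simp add: of_nat_diff)
      also have "\<dots> = int n * int M + p" by (simp add: algebra_simps)
      finally show ?thesis .
    qed
    have sab: "sum a {..<n} = sum b {..<n}" using sa sb by (metis of_nat_eq_iff)
    have inner: "tensor_apply d n (\<lambda>k. X ^\<^sub>m M) (tensor_apply d n (first_site d (mat_powi d X p)) \<psi>) js
        = tensor_apply d n (\<lambda>k. X ^\<^sub>m M) (tensor_apply d n (\<lambda>k. mat_powi d X (ps k)) \<psi>) js"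
      if js: "js \<in> idx d n" for js
    proof -
      have "tensor_apply d n (\<lambda>k. X ^\<^sub>m M) (tensor_apply d n (first_site d (mat_powi d X p)) \<psi>) js
          = tensor_apply d n (\<lambda>k. X ^\<^sub>m M * first_site d (mat_powi d X p) k) \<psi> js"
        using X cF js by (intro tensor_comp) auto
      also have "\<dots> = tensor_apply d n (\<lambda>k. X ^\<^sub>m b k) \<psi> js"
      proof (rule tensor_cong)
        fix k assume "k < n"
        show "X ^\<^sub>m M * first_site d (mat_powi d X p) k = X ^\<^sub>m b k"
          using powi_shift[OF X inv, of M p] pM X unfolding b_def first_site_def by auto
      qed simp
      also have "\<dots> = tensor_apply d n (\<lambda>k. X ^\<^sub>m a k) \<psi> js"
        by (rule eq_sums[OF X s1 s2 n js sab[symmetric]])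
      also have "\<dots> = tensor_apply d n (\<lambda>k. X ^\<^sub>m M * mat_powi d X (ps k)) \<psi> js"
      proof (rule tensor_cong)
        fix k assume k: "k < n"
        show "X ^\<^sub>m a k = X ^\<^sub>m M * mat_powi d X (ps k)"
          using powi_shift[OF X inv, of M "ps k"] pk[OF k] unfolding a_def by auto
      qed simp
      also have "\<dots> = tensor_apply d n (\<lambda>k. X ^\<^sub>m M) (tensor_apply d n (\<lambda>k. mat_powi d X (ps k)) \<psi>) js"
        using X cG js by (intro tensor_comp[symmetric]) auto
      finally show ?thesis .
    qed
    have "tensor_apply d n (first_site d (mat_powi d X p)) \<psi> ix
        = tensor_apply d n (\<lambda>k. mat_inv d X ^\<^sub>m M) (tensor_apply d n (\<lambda>k. X ^\<^sub>m M) (tensor_apply d n (first_site d (mat_powi d X p)) \<psi>)) ix"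
      by (rule undo[OF X inv ix cF])
    also have "\<dots> = tensor_apply d n (\<lambda>k. mat_inv d X ^\<^sub>m M) (tensor_apply d n (\<lambda>k. X ^\<^sub>m M) (tensor_apply d n (\<lambda>k. mat_powi d X (ps k)) \<psi>)) ix"
      by (rule tensor_cong) (simp_all add: inner)
    also have "\<dots> = tensor_apply d n (\<lambda>k. mat_powi d X (ps k)) \<psi> ix"
      by (rule undo[OF X inv ix cG, symmetric])
    finally show ?thesis unfolding p_def .
  qed
  show ?thesis using part1 part2 by blast
qed

end
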